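(* For every $1 \leq q \leq Q$, \[ (Z-Z'_q)_- \leq 8Kt\,\mathbf{1}_{R_q}, \] where $(a)_-:=\max\{-a,0\}$.
   Context: Let $d \geq 2$. Let $\omega=(\omega(x))_{x \in \mathbb{Z}^d}$ be independent random variables with a common law on $\mathbb{N}_0$, not concentrated at $0$. Independently of $\omega$, let $(S_k(x,\ell))_{k \geq 0}$, $x \in \mathbb{Z}^d$, $\ell \in \mathbb{N}$, be independent simple random walks on $\mathbb{Z}^d$ with $S_0(x,\ell)=x$. For $x,y \in \mathbb{Z}^d$ let $\tau(x,y):=\inf\{k \geq 0: S_k(x,\ell)=y \text{ for some } 1 \leq \ell \leq \omega(x)\}$ ($:=\infty$ if $\omega(x)=0$). Let $C_0\in(0,\infty)$ be a constant for which there are $0<c,c'<\infty$, $0<a<1$ with $P(T(0,x)\ge s\mid\omega(0)\ge 1)\le c\,e^{-c's^{a}}$ for all $x\in\mathbb{Z}^d$ and $s\ge C_0\|x\|_1$, where $T(x,y):=\inf\{\sum_{i=0}^{m-1}\tau(x_i,x_{i+1}): m \geq 1,\ x=x_0,\dots,x_m=y\}$. Fix $\gamma>0$ and a constant $K>d(C_0+\gamma+1)$. For $t>0$ define $\sigma_t(x,y)$ by: $\sigma_t(x,y):=4Kt$ if $\|x-y\|_\infty\le t$ and $\tau(x,y)>4Kt$; $\sigma_t(x,y):=4K\|x-y\|_\infty$ if $\|x-y\|_\infty>t$; $\sigma_t(x,y):=\tau(x,y)$ otherwise; and $T_t(x,y):=\inf\{\sum_{i=0}^{m-1}\sigma_t(x_i,x_{i+1}):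 m\ge 1,\ x=x_0,\dots,x_m=y\}$. Fix $x\in\mathbb{Z}^d\setminus\{0\}$ and $t>0$. Tile $\mathbb{Z}^d$ with copies $\Lambda_q$, $q\in\mathbb{N}$, of $(-t/2,t/2]^d$, each centered at a point of $\mathbb{Z}^d$, so that each site lies in exactly one box, and let $U_q:=((\omega(z))_{z\in\Lambda_q},(S_\cdot(z,\ell))_{z\in\Lambda_q,\ell\in\mathbb{N}})$. Number the boxes so that $Z:=T_t(0,x)$ is a function $T_t(0,x,U_1,\dots,U_Q)$ of $U_1,\dots,U_Q$ for some finite $Q$. Let $(U'_q)_{q=1}^Q$ be independent copies of $(U_q)_{q=1}^Q$ and $Z'_q:=T_t(0,x,U_1,\dots,U_{q-1},U'_q,U_{q+1},\dots,U_Q)$. Let $\pi_t(0,x)=(0=x_0,x_1,\dots,x_m=x)$ be a sequence with $T_t(0,x)=\sum_{i=0}^{m-1}\sigma_t(x_i,x_{i+1})$, chosen by a deterministic tie-breaking rule, and let $R_q$ be the event that $\pi_t(0,x)$ intersects $\Lambda_q$. *)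

theory Defs
  imports "HOL-Analysis.Analysis"
begin

type_synonym 'd site = "int ^ 'd"

definition linf :: "('d::finite) site \<Rightarrow> 'd site \<Rightarrow> int" where
  "linf z w = Max (range (\<lambda>i. \<bar>z $ i - w $ i\<bar>))"

definition l1 :: "('d::finite) site \<Rightarrow> 'd site \<Rightarrow> int" where
  "l1 z w = (\<Sum>i\<in>UNIV. \<bar>z $ i - w $ i\<bar>)"

text \<open>A realization of the walks: S z l k = S_k(z,l); each is a nearest-neighbour path
  started at z (the sample paths of simple random walks).\<close>
definition walk_paths :: "(('d::finite) site \<Rightarrow> nat \<Rightarrow> nat \<Rightarrow> 'd site) \<Rightarrow> bool" where
  "walk_paths S \<longleftrightarrow> (\<forall>z l. S z l 0 = z \<and> (\<forall>k. l1 (S z l k) (S z l (Suc k)) = 1))"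

definition tau :: "(('d::finite) site \<Rightarrow> nat) \<Rightarrow> ('d site \<Rightarrow> nat \<Rightarrow> nat \<Rightarrow> 'd site)
    \<Rightarrow> 'd site \<Rightarrow> 'd site \<Rightarrow> enat" where
  "tau \<omega> S x y =
     (if \<exists>k l. 1 \<le> l \<and> l \<le> \<omega> x \<and> S x l k = y
      then enat (LEAST k. \<exists>l. 1 \<le> l \<and> l \<le> \<omega> x \<and> S x l k = y)
      else \<infinity>)"

definition sigma_t :: "real \<Rightarrow> real \<Rightarrow> (('d::finite) site \<Rightarrow> nat) \<Rightarrow> ('d site \<Rightarrow> nat \<Rightarrow> nat \<Rightarrow> 'd site)
    \<Rightarrow> 'd site \<Rightarrow> 'd site \<Rightarrow> real" where
  "sigma_t K t \<omega> S x y =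
     (if real_of_int (linf x y) > t then 4 * K * real_of_int (linf x y)
      else (case tau \<omega> S x y of
              enat k \<Rightarrow> (if real k > 4 * K * t then 4 * K * t else real k)
            | \<infinity> \<Rightarrow> 4 * K * t))"

definition path_cost :: "real \<Rightarrow> real \<Rightarrow> (('d::finite) site \<Rightarrow> nat) \<Rightarrow> ('d site \<Rightarrow> nat \<Rightarrow> nat \<Rightarrow> 'd site)
    \<Rightarrow> 'd site list \<Rightarrow> real" where
  "path_cost K t \<omega> S xs = sum_list (map (\<lambda>(a, b). sigma_t K t \<omega> S a b) (zip xs (tl xs)))"

definition is_seq :: "('d::finite) site \<Rightarrow> 'd site \<Rightarrow> 'd site list \<Rightarrow> bool" where
  "is_seq x y xs \<longleftrightarrow> length xs \<ge> 2 \<and> hd xs = x \<and> last xs = y"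

definition T_t :: "real \<Rightarrow> real \<Rightarrow> (('d::finite) site \<Rightarrow> nat) \<Rightarrow> ('d site \<Rightarrow> nat \<Rightarrow> nat \<Rightarrow> 'd site)
    \<Rightarrow> 'd site \<Rightarrow> 'd site \<Rightarrow> real" where
  "T_t K t \<omega> S x y = Inf {path_cost K t \<omega> S xs | xs. is_seq x y xs}"

definition box :: "real \<Rightarrow> ('d::finite) site \<Rightarrow> 'd site set" where
  "box t c = {z. \<forall>i. - t / 2 < real_of_int (z $ i - c $ i) \<and> real_of_int (z $ i - c $ i) \<le> t / 2}"

definition repl_omega :: "('d site set) \<Rightarrow> ('d site \<Rightarrow> nat) \<Rightarrow> ('d site \<Rightarrow> nat) \<Rightarrow> 'd site \<Rightarrow> nat" where
  "repl_omega A \<omega> \<omega>' = (\<lambda>z. if z \<in> A then \<omega>' z else \<omega> z)"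

definition repl_S :: "('d site set) \<Rightarrow> ('d site \<Rightarrow> nat \<Rightarrow> nat \<Rightarrow> 'd site)
    \<Rightarrow> ('d site \<Rightarrow> nat \<Rightarrow> nat \<Rightarrow> 'd site) \<Rightarrow> 'd site \<Rightarrow> nat \<Rightarrow> nat \<Rightarrow> 'd site" where
  "repl_S A S S' = (\<lambda>z. if z \<in> A then S' z else S z)"

end

theory Submission
  imports Defs
begin

definition pc :: "('a \<Rightarrow> 'a \<Rightarrow> real) \<Rightarrow> 'a list \<Rightarrow> real" where
  "pc f xs = sum_list (map (\<lambda>(a, b). f a b) (zip xs (tl xs)))"

lemma path_cost_pc: "path_cost K t \<omega> S xs = pc (sigma_t K t \<omega> S) xs"
  by (simp add: path_cost_def pc_def)

lemma pc_cons2: "pc f (a # b # l) = f a b + pc f (b # l)"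
  by (simp add: pc_def)

lemma pc_single: "pc f [a] = 0"
  by (simp add: pc_def)

lemma pc_append: "pc f (xs @ y # ys) = pc f (xs @ [y]) + pc f (y # ys)"
proof (induction xs)
  case Nil then show ?case by (simp add: pc_single)
next
  case (Cons a xs)
  then show ?case by (cases xs) (simp_all add: pc_cons2)
qed

lemma pc_nonneg: "(\<And>a b. f a b \<ge> 0) \<Longrightarrow> pc f l \<ge> 0"
  unfolding pc_def by (rule sum_list_nonneg) auto

lemma pc_mono: "(\<And>a b. f a b \<le> g a b) \<Longrightarrow> pc f l \<le> pc g l"
  unfolding pc_def by (rule sum_list_mono) auto

lemma pc_cong: "(\<And>a b. a \<in> set (butlast l) \<Longrightarrow> f a b = g a b) \<Longrightarrow> pc f l = pc g l"
proof (induction l)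
  case Nil then show ?case by (simp add: pc_def)
next
  case (Cons a l)
  then show ?case
  proof (cases l)
    case Nil then show ?thesis by (simp add: pc_single)
  next
    case (Cons b l')
    have "pc f l = pc g l" using Cons.prems Cons.IH \<open>l = b # l'\<close>
      by (metis butlast.simps(2) in_set_butlastD list.distinct(1) list.set_intros(2))
    moreover have "f a b = g a b" using Cons.prems \<open>l = b # l'\<close> by simp
    ultimately show ?thesis using \<open>l = b # l'\<close> by (simp add: pc_cons2)
  qed
qed

lemma sigma_nonneg:
  assumes "K > 0" "t > 0"
  shows "sigma_t K t \<omega> S a b \<ge> 0"
  using assms by (auto simp: sigma_t_def split: enat.splits)

lemma sigma_le:
  assumes "K > 0" "t > 0" "real_of_int (linf a b) \<le> t"
  shows "sigma_t K t \<omega> S a b \<le> 4 * K * t"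
  using assms by (auto simp: sigma_t_def split: enat.splits)

lemma sigma_far:
  assumes "real_of_int (linf a b) > t"
  shows "sigma_t K t \<omega> S a b = sigma_t K t \<omega>' S' a b"
  using assms by (simp add: sigma_t_def)

lemma sigma_le2:
  assumes "K > 0" "t > 0"
  shows "sigma_t K t \<omega> S a b \<le> sigma_t K t \<omega>' S' a b + 4 * K * t"
proof (cases "real_of_int (linf a b) > t")
  case True then show ?thesis using sigma_far[OF True, of K \<omega> S \<omega>' S'] assms by simp
next
  case False
  then show ?thesis using sigma_le[of K t a b \<omega> S] sigma_nonneg[of K t \<omega>' S' a b] assms by simp
qed

lemma sigma_repl:
  assumes "a \<notin> A"
  shows "sigma_t K t (repl_omega A \<omega> \<omega>') (repl_S A S S') a b = sigma_t K t \<omega> S a b"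
proof -
  have "tau (repl_omega A \<omega> \<omega>') (repl_S A S S') a b = tau \<omega> S a b"
    using assms by (auto simp: tau_def repl_omega_def repl_S_def)
  then show ?thesis by (simp add: sigma_t_def)
qed

lemma linf_box:
  assumes "u \<in> box t c" "v \<in> box t c"
  shows "real_of_int (linf u v) \<le> t"
proof -
  have "\<forall>i. \<bar>u $ i - v $ i\<bar> \<le> t"
  proof
    fix i
    have "- t / 2 < real_of_int (u $ i - c $ i)" "real_of_int (u $ i - c $ i) \<le> t / 2"
         "- t / 2 < real_of_int (v $ i - c $ i)" "real_of_int (v $ i - c $ i) \<le> t / 2"
      using assms by (auto simp: box_def)
    then show "\<bar>u $ i - v $ i\<bar> \<le> t" by auto
  qed
  moreover have "linf u v \<in> range (\<lambda>i. \<bar>u $ i - v $ i\<bar>)"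
    unfolding linf_def by (rule Max_in) auto
  ultimately show ?thesis by auto
qed

theorem lemma4p3:
  fixes \<omega> \<omega>' :: "('d::finite) site \<Rightarrow> nat"
    and S S' :: "'d site \<Rightarrow> nat \<Rightarrow> nat \<Rightarrow> 'd site"
    and C0 \<gamma> K t :: real
    and x :: "'d site"
    and c :: "nat \<Rightarrow> 'd site"
    and Q q :: nat
    and \<pi> :: "'d site list"
  assumes dim: "CARD('d) \<ge> 2"
    and C0: "C0 > 0" and gam: "\<gamma> > 0" and K: "K > real CARD('d) * (C0 + \<gamma> + 1)"
    and x0: "x \<noteq> 0" and t: "t > 0"
    and walks: "walk_paths S" and walks': "walk_paths S'"
    and tiling: "\<forall>z. \<exists>!p. p \<ge> 1 \<and> z \<in> box t (c p)"
    and Qdep: "\<forall>\<omega>'' S''. (\<forall>z \<in> (\<Union>p\<in>{1..Q}. box t (c p)). \<omega>'' z = \<omega> z \<and> S'' z = S z)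
                 \<longrightarrow> T_t K t \<omega>'' S'' 0 x = T_t K t \<omega> S 0 x"
    and q: "1 \<le> q" "q \<le> Q"
    and geo: "is_seq 0 x \<pi>" "path_cost K t \<omega> S \<pi> = T_t K t \<omega> S 0 x"
  shows "max (- (T_t K t \<omega> S 0 x
                 - T_t K t (repl_omega (box t (c q)) \<omega> \<omega>') (repl_S (box t (c q)) S S') 0 x)) 0
         \<le> 8 * K * t * (if (\<exists>z \<in> set \<pi>. z \<in> box t (c q)) then 1 else 0)"
proof -
  define B where "B = box t (c q)"
  define \<omega>2 where "\<omega>2 = repl_omega B \<omega> \<omega>'"
  define S2 where "S2 = repl_S B S S'"
  define f where "f = sigma_t K t \<omega> S"
  define g where "g = sigma_t K t \<omega>2 S2"
  have Kp: "K > 0"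
  proof -
    have "real CARD('d) * (C0 + \<gamma> + 1) > 0" using C0 gam by simp
    then show ?thesis using K by linarith
  qed
  have fnn: "\<And>a b. f a b \<ge> 0" unfolding f_def using sigma_nonneg Kp t by blast
  have gnn: "\<And>a b. g a b \<ge> 0" unfolding g_def using sigma_nonneg Kp t by blast
  have lower: "T_t K t \<omega>2 S2 0 x \<le> pc g l" if "is_seq 0 x l" for l
  proof -
    have "T_t K t \<omega>2 S2 0 x = Inf {path_cost K t \<omega>2 S2 xs | xs. is_seq 0 x xs}"
      by (simp add: T_t_def)
    also have "\<dots> \<le> path_cost K t \<omega>2 S2 l"
      apply (rule cInf_lower)
      using that apply blast
      apply (rule bdd_belowI[of _ 0])
      using pc_nonneg[of g, OF gnn] by (auto simp: path_cost_pc g_def)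
    finally show ?thesis by (simp add: path_cost_pc g_def)
  qed
  have Z: "T_t K t \<omega> S 0 x = pc f \<pi>" using geo(2) by (simp add: path_cost_pc f_def)
  have gf: "g a b = f a b" if "a \<notin> B" for a b
    unfolding g_def f_def \<omega>2_def S2_def using sigma_repl[OF that] by simp
  have main: "T_t K t \<omega>2 S2 0 x - T_t K t \<omega> S 0 x
      \<le> 8 * K * t * (if (\<exists>z \<in> set \<pi>. z \<in> B) then 1 else 0)"
  proof (cases "\<exists>z \<in> set \<pi>. z \<in> B")
    case False
    have "pc g \<pi> = pc f \<pi>"
      by (rule pc_cong) (use False gf in \<open>auto dest: in_set_butlastD\<close>)
    then show ?thesis using lower[OF geo(1)] Z False by simp
  next
    case True
    obtain xs u ys where \<pi>1: "\<pi> = xs @ u # ys" and uB: "u \<in> B" and xsB: "\<forall>z\<in>set xs. z \<notin> B"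
      using split_list_first_prop[OF True] by blast
    have "\<exists>z \<in> set (u # ys). z \<in> B" using uB by simp
    from split_list_last_prop[OF this] obtain zs v ws where \<pi>2: "u # ys = zs @ v # ws" and vB: "v \<in> B" and wsB: "\<forall>z\<in>set ws. z \<notin> B"
      by blast
    define \<pi>' where "\<pi>' = xs @ u # v # ws"
    have seq: "is_seq 0 x \<pi>'"
    proof -
      have "hd \<pi>' = hd \<pi>" unfolding \<pi>'_def \<pi>1 by (cases xs) auto
      moreover have "last \<pi>' = last \<pi>" unfolding \<pi>'_def \<pi>1 \<pi>2
        by (metis append_Cons last_ConsR last_appendR list.distinct(1) \<pi>2)
      ultimately show ?thesis using geo(1) unfolding is_seq_def \<pi>'_def by auto
    qed
    have c1: "pc g (xs @ [u]) = pc f (xs @ [u])"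
      by (rule pc_cong) (use xsB gf in auto)
    have c2: "pc g (v # ws) \<le> pc f (v # ws) + 4 * K * t"
    proof (cases ws)
      case Nil then show ?thesis using Kp t by (simp add: pc_single)
    next
      case (Cons w ws')
      have "pc g ws = pc f ws"
        by (rule pc_cong) (use wsB gf in \<open>auto dest: in_set_butlastD\<close>)
      moreover have "g v w \<le> f v w + 4 * K * t"
        unfolding g_def f_def using sigma_le2 Kp t by blast
      ultimately show ?thesis using Cons by (simp add: pc_cons2)
    qed
    have c3: "g u v \<le> 4 * K * t"
      unfolding g_def using uB vB unfolding B_def by (intro sigma_le[OF Kp t linf_box])
    have e1: "pc g \<pi>' = pc g (xs @ [u]) + (g u v + pc g (v # ws))"
      unfolding \<pi>'_def pc_append[of g xs u "v # ws"] pc_cons2 ..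
    have e2: "pc f \<pi> = pc f (xs @ [u]) + pc f (zs @ [v]) + pc f (v # ws)"
    proof -
      have "pc f \<pi> = pc f (xs @ [u]) + pc f (u # ys)"
        unfolding \<pi>1 by (rule pc_append)
      also have "pc f (u # ys) = pc f (zs @ [v]) + pc f (v # ws)"
        unfolding \<pi>2 by (rule pc_append)
      finally show ?thesis by simp
    qed
    have "pc g \<pi>' \<le> pc f \<pi> + 8 * K * t"
      using e1 e2 c1 c2 c3 pc_nonneg[of f "zs @ [v]", OF fnn] by linarith
    then show ?thesis using lower[OF seq] Z True by simp
  qed
  show ?thesis
    using main Kp t unfolding B_def \<omega>2_def S2_def by (auto simp: max_def)
qed

end
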